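(* For any fuzzifying topological space $(X,\tau)$ and $A\subseteq X$, $T_2^P(X,\tau)\le T_2^P(A,\tau/A)$, i.e. $\vDash T_2^P(X,\tau)\to T_2^P(A,\tau/A)$.
   Context: A fuzzifying topology on $X$ is $\tau:P(X)\to[0,1]$ with $\tau(X)=1$, $\tau(A\cap B)\ge\min(\tau(A),\tau(B))$, $\tau(\bigcup A_\lambda)\ge\inf\tau(A_\lambda)$. $N_x(A)=\sup_{x\in B\subseteq A}\tau(B)$; $Cl(A)(x)=1-N_x(X\setminus A)$; for $\mu:X\to[0,1]$, $Int(\mu)(x)=\sup_{x\in B}\min(\tau(B),\inf_{y\in B}\mu(y))$; pre-open degrees $\tau_P(A)=\inf_{x\in A}Int(Cl(A))(x)$; $N^P_x(A)=\sup_{x\in B\subseteq A}\tau_P(B)$. $T_2^P(X,\tau)=\inf_{x,y\in X,x\ne y}\sup\{\min(N^P_x(U),N^P_y(V)):U,V\subseteq X,U\cap V=\emptyset\}$. For the subspace: $(\tau_P/A)(B)=\sup\{\tau_P(V):V\cap A=B\}$ for $B\subseteq A$, $N^{P^A}_x(U)=\sup_{x\in C\subseteq U}(\tau_P/A)(C)$, and $T_2^P(A,\tau/A)=\inf_{x,y\in A,x\ne y}\sup\{\min(N^{P^A}_x(U),N^{P^A}_y(V)):U,V\subseteq A,U\cap V=\emptyset\}$. *)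

theory Defs
  imports "HOL-Analysis.Analysis"
begin

text \<open>Fuzzifying topology on the universe of type 'a (X = UNIV).
 Suprema use the convention sup of empty = 0, infima inf of empty = 1;
 since all values lie in [0,1] we encode these as Sup (insert 0 S), Inf (insert 1 S).\<close>

definition sup0 :: "real set \<Rightarrow> real" where
  "sup0 S = Sup (insert 0 S)"

definition inf1 :: "real set \<Rightarrow> real" where
  "inf1 S = Inf (insert 1 S)"

definition fuzzifying_topology :: "('a set \<Rightarrow> real) \<Rightarrow> bool" where
  "fuzzifying_topology \<tau> \<longleftrightarrow>
     (\<forall>A. 0 \<le> \<tau> A \<and> \<tau> A \<le> 1) \<and>
     \<tau> UNIV = 1 \<and>
     (\<forall>A B. \<tau> (A \<inter> B) \<ge> min (\<tau> A) (\<tau> B)) \<and>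
     (\<forall>\<A>. \<tau> (\<Union>\<A>) \<ge> inf1 (\<tau> ` \<A>))"

definition fnbhd :: "('a set \<Rightarrow> real) \<Rightarrow> 'a \<Rightarrow> 'a set \<Rightarrow> real" where
  "fnbhd \<tau> x A = sup0 {\<tau> B | B. x \<in> B \<and> B \<subseteq> A}"

definition fclosure :: "('a set \<Rightarrow> real) \<Rightarrow> 'a set \<Rightarrow> 'a \<Rightarrow> real" where
  "fclosure \<tau> A x = 1 - fnbhd \<tau> x (- A)"

definition finterior :: "('a set \<Rightarrow> real) \<Rightarrow> ('a \<Rightarrow> real) \<Rightarrow> 'a \<Rightarrow> real" where
  "finterior \<tau> \<mu> x = sup0 {min (\<tau> B) (inf1 (\<mu> ` B)) | B. x \<in> B}"

definition preopen :: "('a set \<Rightarrow> real) \<Rightarrow> 'a set \<Rightarrow> real" where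
  "preopen \<tau> A = inf1 {finterior \<tau> (fclosure \<tau> A) x | x. x \<in> A}"

definition pre_nbhd :: "('a set \<Rightarrow> real) \<Rightarrow> 'a \<Rightarrow> 'a set \<Rightarrow> real" where
  "pre_nbhd \<tau> x A = sup0 {preopen \<tau> B | B. x \<in> B \<and> B \<subseteq> A}"

definition T2P :: "('a set \<Rightarrow> real) \<Rightarrow> real" where
  "T2P \<tau> = inf1 {sup0 {min (pre_nbhd \<tau> x U) (pre_nbhd \<tau> y V) | U V. U \<inter> V = {}}
                 | x y. x \<noteq> y}"

definition preopen_sub :: "('a set \<Rightarrow> real) \<Rightarrow> 'a set \<Rightarrow> 'a set \<Rightarrow> real" where
  "preopen_sub \<tau> A B = sup0 {preopen \<tau> V | V. V \<inter> A = B}"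

definition pre_nbhd_sub :: "('a set \<Rightarrow> real) \<Rightarrow> 'a set \<Rightarrow> 'a \<Rightarrow> 'a set \<Rightarrow> real" where
  "pre_nbhd_sub \<tau> A x U = sup0 {preopen_sub \<tau> A C | C. x \<in> C \<and> C \<subseteq> U}"

definition T2P_sub :: "('a set \<Rightarrow> real) \<Rightarrow> 'a set \<Rightarrow> real" where
  "T2P_sub \<tau> A = inf1 {sup0 {min (pre_nbhd_sub \<tau> A x U) (pre_nbhd_sub \<tau> A y V)
                              | U V. U \<subseteq> A \<and> V \<subseteq> A \<and> U \<inter> V = {}}
                       | x y. x \<in> A \<and> y \<in> A \<and> x \<noteq> y}"

end

theory Submission
  imports Defs
begin

lemma sup0_le: "(\<forall>s\<in>S. s \<le> c) \<Longrightarrow> 0 \<le> c \<Longrightarrow> sup0 S \<le> c"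
  unfolding sup0_def by (rule cSup_least) auto

lemma sup0_upper: "(\<forall>s\<in>S. s \<le> c) \<Longrightarrow> s \<in> S \<Longrightarrow> s \<le> sup0 S"
  unfolding sup0_def by (rule cSup_upper) (auto simp: bdd_above_def intro!: exI[of _ "max c 0"])

lemma sup0_ge0: "(\<forall>s\<in>S. s \<le> c) \<Longrightarrow> 0 \<le> sup0 S"
  unfolding sup0_def by (rule cSup_upper) (auto simp: bdd_above_def intro!: exI[of _ "max c 0"])

lemma sup0_mono: "(\<forall>s\<in>S. s \<le> c) \<Longrightarrow> (\<forall>t\<in>T. \<exists>s\<in>S. t \<le> s) \<Longrightarrow> sup0 T \<le> sup0 S"
proof -
  assume a: "\<forall>s\<in>S. s \<le> c" and b: "\<forall>t\<in>T. \<exists>s\<in>S. t \<le> s"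
  show ?thesis unfolding sup0_def[of T]
  proof (rule cSup_least)
    fix x assume "x \<in> insert 0 T"
    then show "x \<le> sup0 S"
    proof
      assume "x = 0" then show ?thesis using sup0_ge0[OF a] by simp
    next
      assume "x \<in> T" then obtain s where "s \<in> S" "x \<le> s" using b by blast
      then show ?thesis using sup0_upper[OF a] by force
    qed
  qed auto
qed

lemma inf1_le1: "(\<forall>s\<in>S. 0 \<le> s) \<Longrightarrow> inf1 S \<le> 1"
  unfolding inf1_def by (rule cInf_lower) (auto simp: bdd_below_def intro!: exI[of _ 0])

lemma inf1_lower: "(\<forall>s\<in>S. 0 \<le> s) \<Longrightarrow> s \<in> S \<Longrightarrow> inf1 S \<le> s"
  unfolding inf1_def by (rule cInf_lower) (auto simp: bdd_below_def intro!: exI[of _ 0])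

lemma inf1_mono: "(\<forall>s\<in>S. 0 \<le> s) \<Longrightarrow> (\<forall>t\<in>T. \<exists>s\<in>S. s \<le> t) \<Longrightarrow> inf1 S \<le> inf1 T"
proof -
  assume a: "\<forall>s\<in>S. 0 \<le> s" and b: "\<forall>t\<in>T. \<exists>s\<in>S. s \<le> t"
  show ?thesis unfolding inf1_def[of T]
  proof (rule cInf_greatest)
    fix x assume "x \<in> insert 1 T"
    then show "inf1 S \<le> x"
    proof
      assume "x = 1" then show ?thesis using inf1_le1[OF a] by simp
    next
      assume "x \<in> T" then obtain s where "s \<in> S" "s \<le> x" using b by blast
      then show ?thesis using inf1_lower[OF a] by force
    qed
  qed auto
qed

context
  fixes \<tau> :: "'a set \<Rightarrow> real"
  assumes ft: "fuzzifying_topology \<tau>"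
begin

lemma tau_le1: "\<tau> B \<le> 1" using ft unfolding fuzzifying_topology_def by auto

lemma finterior_ge0: "0 \<le> finterior \<tau> \<mu> x"
  unfolding finterior_def
  by (rule sup0_ge0[where c=1]) (auto intro: order_trans[OF min.cobounded1 tau_le1])

lemma preopen_le1: "preopen \<tau> B \<le> 1"
  unfolding preopen_def by (rule inf1_le1) (auto intro: finterior_ge0)

lemma preopen_sub_le1: "preopen_sub \<tau> A B \<le> 1"
  unfolding preopen_sub_def by (rule sup0_le) (auto intro: preopen_le1)

lemma pre_nbhd_le1: "pre_nbhd \<tau> x U \<le> 1"
  unfolding pre_nbhd_def by (rule sup0_le) (auto intro: preopen_le1)

lemma pre_nbhd_sub_le1: "pre_nbhd_sub \<tau> A x U \<le> 1"
  unfolding pre_nbhd_sub_def by (rule sup0_le) (auto intro: preopen_sub_le1)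

lemma preopen_le_sub: "preopen \<tau> B \<le> preopen_sub \<tau> A (B \<inter> A)"
  unfolding preopen_sub_def by (rule sup0_upper[where c=1]) (auto intro: preopen_le1)

lemma pre_nbhd_le_sub:
  assumes "x \<in> A"
  shows "pre_nbhd \<tau> x U \<le> pre_nbhd_sub \<tau> A x (U \<inter> A)"
  unfolding pre_nbhd_def pre_nbhd_sub_def
proof (rule sup0_mono[where c=1])
  show "\<forall>s\<in>{preopen_sub \<tau> A C |C. x \<in> C \<and> C \<subseteq> U \<inter> A}. s \<le> 1"
    by (auto intro: preopen_sub_le1)
  show "\<forall>t\<in>{preopen \<tau> B |B. x \<in> B \<and> B \<subseteq> U}.
          \<exists>s\<in>{preopen_sub \<tau> A C |C. x \<in> C \<and> C \<subseteq> U \<inter> A}. t \<le> s"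
  proof
    fix t assume "t \<in> {preopen \<tau> B |B. x \<in> B \<and> B \<subseteq> U}"
    then obtain B where B: "t = preopen \<tau> B" "x \<in> B" "B \<subseteq> U" by blast
    then show "\<exists>s\<in>{preopen_sub \<tau> A C |C. x \<in> C \<and> C \<subseteq> U \<inter> A}. t \<le> s"
      using assms preopen_le_sub[of B A]
      by (intro bexI[of _ "preopen_sub \<tau> A (B \<inter> A)"]) auto
  qed
qed

end

theorem lemma3p3:
  fixes \<tau> :: "'a set \<Rightarrow> real" and A :: "'a set"
  assumes "fuzzifying_topology \<tau>"
  shows "T2P \<tau> \<le> T2P_sub \<tau> A"
  unfolding T2P_def T2P_sub_def
proof (rule inf1_mono)
  show "\<forall>s\<in>{sup0 {min (pre_nbhd \<tau> x U) (pre_nbhd \<tau> y V) |U V. U \<inter> V = {}} |x y. x \<noteq> y}. 0 \<le> s"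
    by (auto intro!: sup0_ge0[where c=1] simp: min_le_iff_disj pre_nbhd_le1[OF assms])
  show "\<forall>t\<in>{sup0 {min (pre_nbhd_sub \<tau> A x U) (pre_nbhd_sub \<tau> A y V) |U V.
                  U \<subseteq> A \<and> V \<subseteq> A \<and> U \<inter> V = {}} |x y. x \<in> A \<and> y \<in> A \<and> x \<noteq> y}.
        \<exists>s\<in>{sup0 {min (pre_nbhd \<tau> x U) (pre_nbhd \<tau> y V) |U V. U \<inter> V = {}} |x y. x \<noteq> y}. s \<le> t"
  proof
    fix t assume "t \<in> {sup0 {min (pre_nbhd_sub \<tau> A x U) (pre_nbhd_sub \<tau> A y V) |U V.
                  U \<subseteq> A \<and> V \<subseteq> A \<and> U \<inter> V = {}} |x y. x \<in> A \<and> y \<in> A \<and> x \<noteq> y}"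
    then obtain x y where xy: "x \<in> A" "y \<in> A" "x \<noteq> y"
      and t: "t = sup0 {min (pre_nbhd_sub \<tau> A x U) (pre_nbhd_sub \<tau> A y V) |U V.
                  U \<subseteq> A \<and> V \<subseteq> A \<and> U \<inter> V = {}}" by blast
    have "sup0 {min (pre_nbhd \<tau> x U) (pre_nbhd \<tau> y V) |U V. U \<inter> V = {}} \<le> t"
      unfolding t
    proof (rule sup0_mono[where c=1])
      show "\<forall>s\<in>{min (pre_nbhd_sub \<tau> A x U) (pre_nbhd_sub \<tau> A y V) |U V.
                  U \<subseteq> A \<and> V \<subseteq> A \<and> U \<inter> V = {}}. s \<le> 1"
        by (auto simp: min_le_iff_disj pre_nbhd_sub_le1[OF assms])
      show "\<forall>s\<in>{min (pre_nbhd \<tau> x U) (pre_nbhd \<tau> y V) |U V. U \<inter> V = {}}.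
           \<exists>s'\<in>{min (pre_nbhd_sub \<tau> A x U) (pre_nbhd_sub \<tau> A y V) |U V.
                  U \<subseteq> A \<and> V \<subseteq> A \<and> U \<inter> V = {}}. s \<le> s'"
      proof
        fix s assume "s \<in> {min (pre_nbhd \<tau> x U) (pre_nbhd \<tau> y V) |U V. U \<inter> V = {}}"
        then obtain U V where UV: "s = min (pre_nbhd \<tau> x U) (pre_nbhd \<tau> y V)" "U \<inter> V = {}" by blast
        have "s \<le> min (pre_nbhd_sub \<tau> A x (U \<inter> A)) (pre_nbhd_sub \<tau> A y (V \<inter> A))"
          using UV(1) pre_nbhd_le_sub[OF assms xy(1), of U] pre_nbhd_le_sub[OF assms xy(2), of V]
          by linarith
        moreover have "U \<inter> A \<subseteq> A \<and> V \<inter> A \<subseteq> A \<and> (U \<inter> A) \<inter> (V \<inter> A) = {}" using UV(2) by blast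
        ultimately show "\<exists>s'\<in>{min (pre_nbhd_sub \<tau> A x U) (pre_nbhd_sub \<tau> A y V) |U V.
                  U \<subseteq> A \<and> V \<subseteq> A \<and> U \<inter> V = {}}. s \<le> s'" by blast
      qed
    qed
    then show "\<exists>s\<in>{sup0 {min (pre_nbhd \<tau> x U) (pre_nbhd \<tau> y V) |U V. U \<inter> V = {}} |x y. x \<noteq> y}. s \<le> t"
      using xy(3) by blast
  qed
qed

end
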